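(* Let $f:\{0,1\}^n\to\{0,1\}$ be a total Boolean function and $g=1-2f:\{0,1\}^n\to\{-1,1\}$. Let $R=H\,\mathrm{diag}(g)\,H$. Then $\lambda(f)=\max_{v\in\mathbb{R}^{2^n}:\|v\|=1} v^{\mathsf T}(RXR-X)v$.
   Context: $H$ is the $2^n\times2^n$ matrix indexed by $\{0,1\}^n$ with $H_{xy}=(-1)^{\langle x,y\rangle}2^{-n/2}$. $\mathrm{diag}(g)$ is the diagonal matrix with $\mathrm{diag}(g)_{xx}=g(x)$, and $X$ is the diagonal matrix with $X_{xx}=|x|$, the Hamming weight of $x$. The sensitivity graph $G_f$ has vertex set $\{0,1\}^n$ and an edge between $x,y$ iff they differ in exactly one coordinate and $f(x)\ne f(y)$; $A_f$ is its adjacency matrix and $\lambda(f)=\|A_f\|$. *)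

theory Defs
  imports "HOL-Analysis.Analysis"
begin

text \<open>The Boolean cube {0,1}^n is encoded as the subsets of {0..<n}
  (x corresponds to the indicator vector of x).  Matrices indexed by the cube
  are functions nat set => nat set => real, vectors are nat set => real; only
  their values on the cube matter.\<close>

definition cube :: "nat \<Rightarrow> nat set set" where
  "cube n = Pow {..<n}"

text \<open>Inner product <x,y> = |x \<inter> y|, Hamming weight |x| = card x.\<close>

definition hadamard :: "nat \<Rightarrow> nat set \<Rightarrow> nat set \<Rightarrow> real" where
  "hadamard n x y = (-1) ^ card (x \<inter> y) * 2 powr (- real n / 2)"

definition mmul :: "nat \<Rightarrow> (nat set \<Rightarrow> nat set \<Rightarrow> real) \<Rightarrow> (nat set \<Rightarrow> nat set \<Rightarrow> real)
                     \<Rightarrow> nat set \<Rightarrow> nat set \<Rightarrow> real" where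
  "mmul n A B x y = (\<Sum>z\<in>cube n. A x z * B z y)"

definition mdiag :: "(nat set \<Rightarrow> real) \<Rightarrow> nat set \<Rightarrow> nat set \<Rightarrow> real" where
  "mdiag g x y = (if x = y then g x else 0)"

definition weight_mat :: "nat set \<Rightarrow> nat set \<Rightarrow> real" where
  "weight_mat x y = (if x = y then real (card x) else 0)"

definition sens_adj :: "(nat set \<Rightarrow> real) \<Rightarrow> nat set \<Rightarrow> nat set \<Rightarrow> real" where
  "sens_adj f x y = (if card (x - y \<union> (y - x)) = 1 \<and> f x \<noteq> f y then 1 else 0)"

definition vnorm :: "nat \<Rightarrow> (nat set \<Rightarrow> real) \<Rightarrow> real" where
  "vnorm n v = sqrt (\<Sum>x\<in>cube n. (v x)\<^sup>2)"

definition mvec :: "nat \<Rightarrow> (nat set \<Rightarrow> nat set \<Rightarrow> real) \<Rightarrow> (nat set \<Rightarrow> real) \<Rightarrow> nat set \<Rightarrow> real" where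
  "mvec n A v x = (\<Sum>y\<in>cube n. A x y * v y)"

definition op_norm :: "nat \<Rightarrow> (nat set \<Rightarrow> nat set \<Rightarrow> real) \<Rightarrow> real" where
  "op_norm n A = Sup {vnorm n (mvec n A v) | v. vnorm n v = 1}"

definition quad_form :: "nat \<Rightarrow> (nat set \<Rightarrow> nat set \<Rightarrow> real) \<Rightarrow> (nat set \<Rightarrow> real) \<Rightarrow> real" where
  "quad_form n M v = (\<Sum>x\<in>cube n. \<Sum>y\<in>cube n. v x * M x y * v y)"

end

theory Submission
  imports Defs
begin


lemma par:
  assumes "finite A" "finite B"
  shows "(-1::real)^card A * (-1)^card B = (-1)^card (A - B \<union> (B - A))"
proof -
  have a: "card A = card (A - B) + card (A \<inter> B)"
    using assms by (metis Diff_Diff_Int card_Diff_subset_Int Int_lower1 add.commute card_Diff_subset card_mono le_add_diff_inverse2 finite_Int)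
  have b: "card B = card (B - A) + card (A \<inter> B)"
    using assms by (metis Diff_Diff_Int Int_commute card_Diff_subset_Int Int_lower1 add.commute card_Diff_subset card_mono le_add_diff_inverse2 finite_Int)
  have c: "card (A - B \<union> (B - A)) = card (A - B) + card (B - A)"
    using assms by (intro card_Un_disjoint) auto
  have "(-1::real)^card A * (-1)^card B = (-1)^(card (A-B) + card (B-A)) * ((-1)^card (A\<inter>B))^2"
    unfolding a b by (simp add: power_add power2_eq_square mult_ac)
  also have "\<dots> = (-1)^card (A - B \<union> (B - A))"
  proof -
    have "((-1::real)^k)^2 = 1" for k :: nat by (induct k) (auto simp: power2_eq_square)
    then show ?thesis by (simp add: c)
  qed
  finally show ?thesis .
qed

lemma finite_cube: "finite (cube n)" by (simp add: cube_def)
lemma cube_finite_el: "x \<in> cube n \<Longrightarrow> finite x"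
  by (auto simp: cube_def intro: finite_subset)

lemma chsum:
  assumes "T \<subseteq> {..<n}"
  shows "(\<Sum>z\<in>cube n. (-1::real)^card (z \<inter> T)) = (if T = {} then 2^n else 0)"
proof (cases "T = {}")
  case True
  then show ?thesis by (simp add: cube_def card_Pow)
next
  case False
  then obtain t where t: "t \<in> T" by auto
  with assms have tn: "t < n" by auto
  define h where "h z = z - {t} \<union> ({t} - z)" for z
  have hh: "h (h z) = z" for z unfolding h_def by auto
  have hc: "z \<in> cube n \<Longrightarrow> h z \<in> cube n" for z using tn unfolding h_def cube_def by auto
  have neg: "(-1::real)^card (h z \<inter> T) = - ((-1)^card (z \<inter> T))" if "z \<in> cube n" for z
  proof -
    have fz: "finite (z \<inter> T)" using cube_finite_el[OF that] by auto
    have "(-1::real)^card (z \<inter> T) * (-1)^card {t} = (-1)^card ((z \<inter> T) - {t} \<union> ({t} - (z \<inter> T)))"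
      by (rule par) (use fz in auto)
    moreover have "(z \<inter> T) - {t} \<union> ({t} - (z \<inter> T)) = h z \<inter> T" using t unfolding h_def by auto
    ultimately show ?thesis by simp
  qed
  have "(\<Sum>z\<in>cube n. (-1::real)^card (z \<inter> T)) = (\<Sum>z\<in>cube n. (-1::real)^card (h z \<inter> T))"
    by (rule sum.reindex_bij_witness[of _ h h]) (auto simp: hh hc)
  also have "\<dots> = - (\<Sum>z\<in>cube n. (-1::real)^card (z \<inter> T))"
    by (simp add: neg sum_negf)
  finally show ?thesis using False by simp
qed

lemma hsym: "hadamard n x y = hadamard n y x"
  by (simp add: hadamard_def Int_commute)

lemma cc: "2 powr (- real n / 2) * 2 powr (- real n / 2) = 1 / 2^n"
proof -
  have "2 powr (- real n / 2) * 2 powr (- real n / 2) = 2 powr (- real n)"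
    by (simp flip: powr_add)
  also have "\<dots> = 1 / 2^n" by (simp add: powr_minus powr_realpow divide_inverse)
  finally show ?thesis .
qed

lemma hprod:
  assumes "z \<in> cube n" "x \<in> cube n" "y \<in> cube n"
  shows "hadamard n z x * hadamard n z y = (-1)^card (z \<inter> (x - y \<union> (y - x))) / 2^n"
proof -
  have f: "finite (z \<inter> x)" "finite (z \<inter> y)" using cube_finite_el[OF assms(1)] by auto
  have e: "(z \<inter> x) - (z \<inter> y) \<union> ((z \<inter> y) - (z \<inter> x)) = z \<inter> (x - y \<union> (y - x))" by auto
  have "hadamard n z x * hadamard n z y = ((-1)^card (z \<inter> x) * (-1)^card (z \<inter> y)) *
     (2 powr (- real n / 2) * 2 powr (- real n / 2))"
    by (simp add: hadamard_def mult_ac)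
  also have "\<dots> = (-1)^card (z \<inter> (x - y \<union> (y - x))) / 2^n"
    unfolding cc par[OF f] e by simp
  finally show ?thesis .
qed

lemma horth:
  assumes "x \<in> cube n" "y \<in> cube n"
  shows "(\<Sum>z\<in>cube n. hadamard n z x * hadamard n z y) = (if x = y then 1 else 0)"
proof -
  have sub: "x - y \<union> (y - x) \<subseteq> {..<n}" using assms by (auto simp: cube_def)
  have "(\<Sum>z\<in>cube n. hadamard n z x * hadamard n z y) =
        (\<Sum>z\<in>cube n. (-1::real)^card (z \<inter> (x - y \<union> (y - x)))) / 2^n"
    by (simp add: hprod assms sum_divide_distrib)
  also have "\<dots> = (if x = y then 1 else 0)" unfolding chsum[OF sub] by auto
  finally show ?thesis .
qed

lemma HH:
  assumes "x \<in> cube n"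
  shows "mvec n (hadamard n) (mvec n (hadamard n) u) x = u x"
proof -
  have "mvec n (hadamard n) (mvec n (hadamard n) u) x =
     (\<Sum>y\<in>cube n. \<Sum>z\<in>cube n. hadamard n y x * hadamard n y z * u z)"
    by (simp add: mvec_def sum_distrib_left hsym[of n x] mult_ac)
  also have "\<dots> = (\<Sum>z\<in>cube n. (\<Sum>y\<in>cube n. hadamard n y x * hadamard n y z) * u z)"
    by (subst sum.swap) (simp add: sum_distrib_right)
  also have "\<dots> = (\<Sum>z\<in>cube n. (if x = z then u z else 0))"
    by (rule sum.cong) (auto simp: horth assms)
  also have "\<dots> = u x" using assms finite_cube by simp
  finally show ?thesis .
qed



definition sd :: "nat set \<Rightarrow> nat set \<Rightarrow> nat set" where "sd x y = x - y \<union> (y - x)"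

lemma card_ind:
  assumes "z \<in> cube n"
  shows "real (card z) = (\<Sum>i<n. (1 - (-1::real)^card (z \<inter> {i})) / 2)"
proof -
  have "z \<subseteq> {..<n}" using assms by (auto simp: cube_def)
  then have "card z = (\<Sum>i<n. if i \<in> z then 1 else 0)" by (simp add: sum.If_cases Int_absorb1 Int_absorb2)
  then have "real (card z) = (\<Sum>i<n. if i \<in> z then 1 else 0)" by (simp add: of_nat_sum if_distrib cong: if_cong)
  also have "\<dots> = (\<Sum>i<n. (1 - (-1::real)^card (z \<inter> {i})) / 2)"
    by (rule sum.cong) auto
  finally show ?thesis .
qed

lemma Kp:
  assumes "T \<subseteq> {..<n}"
  shows "(\<Sum>z\<in>cube n. real (card z) * (-1)^card (z \<inter> T)) =
     2^n * (if T = {} then real n / 2 else if card T = 1 then -1/2 else 0)"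
proof -
  have e: "(1 - (-1::real)^card (z \<inter> {i})) / 2 * (-1)^card (z \<inter> T) =
        ((-1)^card (z \<inter> T) - (-1)^card (z \<inter> sd T {i})) / 2" if "z \<in> cube n" for z i
  proof -
    have f: "finite (z \<inter> {i})" "finite (z \<inter> T)" using cube_finite_el[OF that] by auto
    have "(-1::real)^card (z \<inter> {i}) * (-1)^card (z \<inter> T) = (-1)^card (z \<inter> sd T {i})"
      unfolding par[OF f] sd_def by (rule arg_cong[where f="\<lambda>A. (-1::real)^card A"]) auto
    then show ?thesis by (simp add: algebra_simps diff_divide_distrib)
  qed
  have sub: "sd T {i} \<subseteq> {..<n}" if "i < n" for i using assms that by (auto simp: sd_def)
  have "(\<Sum>z\<in>cube n. real (card z) * (-1)^card (z \<inter> T)) =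
        (\<Sum>z\<in>cube n. \<Sum>i<n. (1 - (-1::real)^card (z \<inter> {i})) / 2 * (-1)^card (z \<inter> T))"
    by (rule sum.cong) (auto simp: card_ind sum_distrib_right)
  also have "\<dots> = (\<Sum>i<n. \<Sum>z\<in>cube n. ((-1)^card (z \<inter> T) - (-1)^card (z \<inter> sd T {i})) / 2)"
  proof (subst sum.swap, rule sum.cong[OF refl], rule sum.cong[OF refl])
    fix i z assume "z \<in> cube n"
    then show "(1 - (-1::real)^card (z \<inter> {i})) / 2 * (-1)^card (z \<inter> T) =
        ((-1)^card (z \<inter> T) - (-1)^card (z \<inter> sd T {i})) / 2" by (rule e)
  qed
  also have "\<dots> = (\<Sum>i<n. ((if T = {} then 2^n else 0) - (if T = {i} then 2^n else 0)) / 2)"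
  proof (rule sum.cong[OF refl])
    fix i assume "i \<in> {..<n}"
    then have "sd T {i} = {} \<longleftrightarrow> T = {i}" by (auto simp: sd_def)
    then show "(\<Sum>z\<in>cube n. ((-1::real)^card (z \<inter> T) - (-1)^card (z \<inter> sd T {i})) / 2) =
       ((if T = {} then 2^n else 0) - (if T = {i} then 2^n else 0)) / 2"
      using chsum[OF assms] chsum[OF sub] \<open>i \<in> {..<n}\<close>
      by (simp add: sum_subtractf flip: sum_divide_distrib)
  qed
  also have "\<dots> = 2^n * (if T = {} then real n / 2 else if card T = 1 then -1/2 else 0)"
  proof (cases "T = {}")
    case True then show ?thesis by simp
  next
    case F: False
    show ?thesis
    proof (cases "card T = 1")
      case True
      then obtain t where t: "T = {t}" by (auto simp: card_Suc_eq)
      with assms have "t < n" by auto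
      have "(\<Sum>i<n. ((if T = {} then 2^n else 0) - (if T = {i} then 2^n else 0)) / (2::real)) =
            (\<Sum>i<n. if i = t then - (2^n/2) else 0)"
        by (rule sum.cong) (auto simp: t)
      also have "\<dots> = - (2^n/2)" using \<open>t < n\<close> by simp
      finally show ?thesis using F True by simp
    next
      case False
      have "T \<noteq> {i}" for i using False by auto
      then show ?thesis using F False by simp
    qed
  qed
  finally show ?thesis .
qed

lemma NB:
  assumes "x \<in> cube n"
  shows "(\<Sum>y\<in>cube n. if card (sd x y) = 1 then h y else 0) = (\<Sum>i<n. h (sd x {i}))"
proof -
  have "(\<Sum>y\<in>cube n. if card (sd x y) = 1 then h y else 0) = (\<Sum>y\<in>{y\<in>cube n. card (sd x y) = 1}. h y)"
    by (simp add: sum.inter_filter finite_cube)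
  also have "\<dots> = (\<Sum>i<n. h (sd x {i}))"
  proof (rule sum.reindex_bij_witness[of _ "\<lambda>i. sd x {i}" "\<lambda>y. the_elem (sd x y)"])
    fix i assume i: "i \<in> {..<n}"
    have e: "sd x (sd x {i}) = {i}" by (auto simp: sd_def)
    show "the_elem (sd x (sd x {i})) = i" unfolding e by simp
    have c1: "card (sd x (sd x {i})) = 1" unfolding e by simp
    have "sd x {i} \<in> cube n" using i assms by (auto simp: cube_def sd_def)
    then show "sd x {i} \<in> {y \<in> cube n. card (sd x y) = 1}" using c1 by simp
  next
    fix y assume y: "y \<in> {y \<in> cube n. card (sd x y) = 1}"
    then obtain t where t: "sd x y = {t}" by (auto simp: card_Suc_eq)
    have "t \<in> sd x y" using t by auto
    then have "t < n" using y assms by (auto simp: cube_def sd_def)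
    then show "the_elem (sd x y) \<in> {..<n}" using t by simp
    have inv: "sd x (sd x y) = y" by (auto simp: sd_def)
    have "sd x {t} = y" using inv t by simp
    then show "sd x {the_elem (sd x y)} = y" using t by simp
    show "h (sd x {the_elem (sd x y)}) = h y" using \<open>sd x {t} = y\<close> t by simp
  qed
  finally show ?thesis .
qed



definition ns :: "nat \<Rightarrow> (nat set \<Rightarrow> real) \<Rightarrow> real" where
  "ns n v = (\<Sum>x\<in>cube n. (v x)^2)"
definition Q0 :: "nat \<Rightarrow> (nat set \<Rightarrow> real) \<Rightarrow> real" where
  "Q0 n v = (\<Sum>x\<in>cube n. real (card x) * (v x)^2)"
definition EE :: "nat \<Rightarrow> (nat set \<Rightarrow> real) \<Rightarrow> real" where
  "EE n v = (\<Sum>x\<in>cube n. \<Sum>i<n. v x * v (sd x {i}))"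

lemma sd_empty: "sd x y = {} \<longleftrightarrow> x = y" by (auto simp: sd_def)
lemma sd_sub: "x \<in> cube n \<Longrightarrow> y \<in> cube n \<Longrightarrow> sd x y \<subseteq> {..<n}" by (auto simp: sd_def cube_def)
lemma sd_cube: "x \<in> cube n \<Longrightarrow> i < n \<Longrightarrow> sd x {i} \<in> cube n" by (auto simp: sd_def cube_def)

lemma Q0H: "Q0 n (mvec n (hadamard n) u) = real n / 2 * ns n u - 1/2 * EE n u"
proof -
  let ?C = "cube n" and ?H = "hadamard n"
  have "Q0 n (mvec n ?H u) = (\<Sum>z\<in>?C. \<Sum>x\<in>?C. \<Sum>y\<in>?C. real (card z) * (?H z x * ?H z y) * (u x * u y))"
    unfolding Q0_def mvec_def power2_eq_square sum_product unfolding sum_distrib_left by (simp add: mult_ac)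
  also have "\<dots> = (\<Sum>x\<in>?C. \<Sum>y\<in>?C. (u x * u y) * (\<Sum>z\<in>?C. real (card z) * (?H z x * ?H z y)))"
    by (subst sum.swap, rule sum.cong[OF refl], subst sum.swap) (simp add: sum_distrib_left mult_ac)
  also have "\<dots> = (\<Sum>x\<in>?C. \<Sum>y\<in>?C. (u x * u y) * (if x = y then real n / 2 else if card (sd x y) = 1 then -1/2 else 0))"
  proof (intro sum.cong refl)
    fix x y assume xy: "x \<in> ?C" "y \<in> ?C"
    have "(\<Sum>z\<in>?C. real (card z) * (?H z x * ?H z y)) = (\<Sum>z\<in>?C. real (card z) * (-1)^card (z \<inter> sd x y)) / 2^n"
      by (simp add: hprod xy sum_divide_distrib sd_def)
    also have "\<dots> = (if x = y then real n / 2 else if card (sd x y) = 1 then -1/2 else 0)"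
      unfolding Kp[OF sd_sub[OF xy]] sd_empty by simp
    finally show "(u x * u y) * (\<Sum>z\<in>?C. real (card z) * (?H z x * ?H z y)) =
      (u x * u y) * (if x = y then real n / 2 else if card (sd x y) = 1 then -1/2 else 0)" by simp
  qed
  also have "\<dots> = (\<Sum>x\<in>?C. real n / 2 * (u x)^2 - 1/2 * (\<Sum>i<n. u x * u (sd x {i})))"
  proof (rule sum.cong[OF refl])
    fix x assume x: "x \<in> ?C"
    have e: "(u x * u y) * (if x = y then real n / 2 else if card (sd x y) = 1 then -1/2 else 0)
        = (if x = y then real n / 2 * (u x)^2 else 0) - 1/2 * (if card (sd x y) = 1 then u x * u y else 0)" for y
      by (auto simp: sd_def power2_eq_square)
    have s1: "(\<Sum>y\<in>?C. if card (sd x y) = 1 then u x * u y else 0) = (\<Sum>i<n. u x * u (sd x {i}))"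
      by (rule NB[OF x])
    have s2: "(\<Sum>y\<in>?C. if x = y then real n / 2 * (u x)^2 else 0) = real n / 2 * (u x)^2"
      using x finite_cube by simp
    have "(\<Sum>y\<in>?C. (u x * u y) * (if x = y then real n / 2 else if card (sd x y) = 1 then -1/2 else 0)) =
       (\<Sum>y\<in>?C. if x = y then real n / 2 * (u x)^2 else 0) - 1/2 * (\<Sum>y\<in>?C. if card (sd x y) = 1 then u x * u y else 0)"
      by (simp only: e sum_subtractf sum_distrib_left)
    then show "(\<Sum>y\<in>?C. (u x * u y) * (if x = y then real n / 2 else if card (sd x y) = 1 then -1/2 else 0)) =
        real n / 2 * (u x)^2 - 1/2 * (\<Sum>i<n. u x * u (sd x {i}))"
      unfolding s1 s2 .
  qed
  also have "\<dots> = real n / 2 * ns n u - 1/2 * EE n u"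
    by (simp add: ns_def EE_def sum_subtractf sum_distrib_left)
  finally show ?thesis .
qed

lemma mvec_mmul: "mvec n (mmul n A B) v = mvec n A (mvec n B v)"
proof
  fix x
  show "mvec n (mmul n A B) v x = mvec n A (mvec n B v) x"
    unfolding mvec_def mmul_def sum_distrib_left sum_distrib_right
    by (subst sum.swap) (simp add: mult_ac)
qed

lemma mvec_cong: "(\<And>x. x \<in> cube n \<Longrightarrow> u x = u' x) \<Longrightarrow> mvec n A u = mvec n A u'"
  unfolding mvec_def by (intro ext sum.cong) auto

lemma mvec_diag: "x \<in> cube n \<Longrightarrow> mvec n (mdiag g) w x = g x * w x"
proof -
  assume x: "x \<in> cube n"
  have "mvec n (mdiag g) w x = (\<Sum>y\<in>cube n. if x = y then g x * w x else 0)"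
    unfolding mvec_def by (rule sum.cong) (auto simp: mdiag_def)
  then show ?thesis using x finite_cube by simp
qed

lemma mmul_diag: "x \<in> cube n \<Longrightarrow> mmul n (mdiag g) B x y = g x * B x y"
proof -
  assume x: "x \<in> cube n"
  have "mmul n (mdiag g) B x y = (\<Sum>z\<in>cube n. if x = z then g x * B x y else 0)"
    unfolding mmul_def by (rule sum.cong) (auto simp: mdiag_def)
  then show ?thesis using x finite_cube by simp
qed

lemma mvec_weight: "x \<in> cube n \<Longrightarrow> mvec n weight_mat w x = real (card x) * w x"
proof -
  assume x: "x \<in> cube n"
  have "mvec n weight_mat w x = (\<Sum>y\<in>cube n. if x = y then real (card x) * w x else 0)"
    unfolding mvec_def by (rule sum.cong) (auto simp: weight_mat_def)
  then show ?thesis using x finite_cube by simp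
qed

lemma qf_mmul: "quad_form n (mmul n A B) v = (\<Sum>z\<in>cube n. mvec n (\<lambda>x y. A y x) v z * mvec n B v z)"
proof -
  let ?C = "cube n"
  have "quad_form n (mmul n A B) v = (\<Sum>x\<in>?C. \<Sum>y\<in>?C. \<Sum>z\<in>?C. v x * A x z * B z y * v y)"
    unfolding quad_form_def mmul_def sum_distrib_left sum_distrib_right by (simp add: mult_ac)
  also have "\<dots> = (\<Sum>x\<in>?C. \<Sum>z\<in>?C. \<Sum>y\<in>?C. v x * A x z * B z y * v y)"
    by (rule sum.cong[OF refl], rule sum.swap)
  also have "\<dots> = (\<Sum>z\<in>?C. \<Sum>x\<in>?C. \<Sum>y\<in>?C. v x * A x z * B z y * v y)"
    by (rule sum.swap)
  also have "\<dots> = (\<Sum>z\<in>cube n. mvec n (\<lambda>x y. A y x) v z * mvec n B v z)"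
    unfolding mvec_def sum_product by (simp add: mult_ac)
  finally show ?thesis .
qed

lemma qf_diff: "quad_form n (\<lambda>x y. P x y - W x y) v = quad_form n P v - quad_form n W v"
  unfolding quad_form_def by (simp add: algebra_simps sum_subtractf)

lemma qf_weight: "quad_form n weight_mat v = Q0 n v"
  unfolding quad_form_def Q0_def
proof (rule sum.cong[OF refl])
  fix x assume "x \<in> cube n"
  have "(\<Sum>y\<in>cube n. v x * weight_mat x y * v y) = (\<Sum>y\<in>cube n. if x = y then real (card x) * (v x)^2 else 0)"
    by (rule sum.cong) (auto simp: weight_mat_def power2_eq_square)
  then show "(\<Sum>y\<in>cube n. v x * weight_mat x y * v y) = real (card x) * (v x)^2"
    using finite_cube \<open>x \<in> cube n\<close> by simp
qed

lemma Q0_cong: "(\<And>x. x \<in> cube n \<Longrightarrow> u x = u' x) \<Longrightarrow> Q0 n u = Q0 n u'"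
  unfolding Q0_def by (intro sum.cong) auto
lemma ns_cong: "(\<And>x. x \<in> cube n \<Longrightarrow> u x = u' x) \<Longrightarrow> ns n u = ns n u'"
  unfolding ns_def by (intro sum.cong) auto
lemma qf_cong: "(\<And>x. x \<in> cube n \<Longrightarrow> u x = u' x) \<Longrightarrow> quad_form n A u = quad_form n A u'"
  unfolding quad_form_def by (intro sum.cong) auto

lemma main_id:
  assumes fv: "\<forall>x\<in>cube n. f x \<in> {0, 1}"
  defines "g \<equiv> (\<lambda>x. 1 - 2 * f x)"
  defines "R \<equiv> mmul n (hadamard n) (mmul n (mdiag g) (hadamard n))"
  defines "M \<equiv> (\<lambda>x y. mmul n R (mmul n weight_mat R) x y - weight_mat x y)"
  shows "quad_form n M v = quad_form n (sens_adj f) (mvec n (hadamard n) v)"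
proof -
  let ?H = "hadamard n"
  define w where "w = mvec n ?H v"
  define Dw where "Dw = (\<lambda>z. g z * w z)"
  have Rv: "mvec n R v = mvec n ?H Dw"
    unfolding R_def mvec_mmul w_def[symmetric] Dw_def by (rule mvec_cong) (simp add: mvec_diag)
  have Rsym: "(\<lambda>x y. R y x) = R"
  proof (intro ext)
    fix x y
    have "R y x = (\<Sum>z\<in>cube n. ?H y z * (g z * ?H z x))"
      unfolding R_def mmul_def[of n "?H"] by (intro sum.cong refl) (simp add: mmul_diag)
    also have "\<dots> = (\<Sum>z\<in>cube n. ?H x z * (g z * ?H z y))"
      by (intro sum.cong refl) (simp add: hsym mult_ac)
    also have "\<dots> = R x y"
      unfolding R_def mmul_def[of n "?H"] by (intro sum.cong refl) (simp add: mmul_diag)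
    finally show "R y x = R x y" .
  qed
  have q1: "quad_form n (mmul n R (mmul n weight_mat R)) v = Q0 n (mvec n R v)"
    unfolding qf_mmul Rsym Q0_def power2_eq_square
    by (rule sum.cong[OF refl]) (simp add: mvec_mmul mvec_weight)
  have "quad_form n M v = Q0 n (mvec n ?H Dw) - Q0 n (mvec n ?H w)"
  proof -
    have "Q0 n v = Q0 n (mvec n ?H w)" unfolding w_def by (rule Q0_cong) (simp add: HH)
    then show ?thesis unfolding M_def qf_diff q1 qf_weight Rv by simp
  qed
  also have "\<dots> = 1/2 * (EE n w - EE n Dw)"
  proof -
    have "ns n Dw = ns n w" unfolding ns_def Dw_def
    proof (rule sum.cong[OF refl])
      fix x assume "x \<in> cube n"
      then have "(g x)^2 = 1" using fv unfolding g_def by (auto simp: power2_eq_square)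
      then show "(g x * w x)^2 = (w x)^2" by (simp add: power_mult_distrib)
    qed
    then show ?thesis unfolding Q0H by (simp add: algebra_simps)
  qed
  also have "\<dots> = (\<Sum>x\<in>cube n. \<Sum>i<n. w x * (if f x \<noteq> f (sd x {i}) then 1 else 0) * w (sd x {i}))"
  proof -
    have "EE n w - EE n Dw = (\<Sum>x\<in>cube n. \<Sum>i<n. 2 * (w x * (if f x \<noteq> f (sd x {i}) then 1 else 0) * w (sd x {i})))"
      unfolding EE_def sum_subtractf[symmetric]
    proof (intro sum.cong refl)
      fix x i assume x: "x \<in> cube n" and i: "i \<in> {..<n}"
      have "f x \<in> {0,1}" "f (sd x {i}) \<in> {0,1}" using fv x i sd_cube by auto
      then show "w x * w (sd x {i}) - Dw x * Dw (sd x {i}) =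
           2 * (w x * (if f x \<noteq> f (sd x {i}) then 1 else 0) * w (sd x {i}))"
        unfolding Dw_def g_def by auto
    qed
    then show ?thesis by (simp add: sum_distrib_left)
  qed
  also have "\<dots> = quad_form n (sens_adj f) w"
    unfolding quad_form_def
  proof (rule sum.cong[OF refl])
    fix x assume x: "x \<in> cube n"
    have "(\<Sum>y\<in>cube n. w x * sens_adj f x y * w y) =
          (\<Sum>y\<in>cube n. if card (sd x y) = 1 then w x * (if f x \<noteq> f y then 1 else 0) * w y else 0)"
      by (rule sum.cong) (auto simp: sens_adj_def sd_def)
    then show "(\<Sum>i<n. w x * (if f x \<noteq> f (sd x {i}) then 1 else 0) * w (sd x {i})) =
         (\<Sum>y\<in>cube n. w x * sens_adj f x y * w y)"
      by (simp only: NB[OF x, of "\<lambda>y. w x * (if f x \<noteq> f y then 1 else 0) * w y"])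
  qed
  finally show ?thesis unfolding w_def .
qed



lemma vnorm_iff: "vnorm n v = 1 \<longleftrightarrow> ns n v = 1"
  by (simp add: vnorm_def ns_def)

lemma ns_nonneg: "0 \<le> ns n v" by (simp add: ns_def sum_nonneg)

lemma nsH: "ns n (mvec n (hadamard n) v) = ns n v"
proof -
  let ?C = "cube n" and ?H = "hadamard n"
  have "ns n (mvec n ?H v) = (\<Sum>z\<in>?C. \<Sum>x\<in>?C. \<Sum>y\<in>?C. (?H z x * ?H z y) * (v x * v y))"
    unfolding ns_def mvec_def power2_eq_square sum_product by (simp add: mult_ac)
  also have "\<dots> = (\<Sum>x\<in>?C. \<Sum>y\<in>?C. (v x * v y) * (\<Sum>z\<in>?C. ?H z x * ?H z y))"
    by (subst sum.swap, rule sum.cong[OF refl], subst sum.swap) (simp add: sum_distrib_left mult_ac)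
  also have "\<dots> = (\<Sum>x\<in>?C. \<Sum>y\<in>?C. if x = y then (v x)^2 else 0)"
    by (intro sum.cong refl) (simp add: horth power2_eq_square)
  also have "\<dots> = ns n v" unfolding ns_def using finite_cube by simp
  finally show ?thesis .
qed

lemma qf_as: "quad_form n A w = (\<Sum>x\<in>cube n. w x * mvec n A w x)"
  unfolding quad_form_def mvec_def by (simp add: sum_distrib_left mult_ac)

lemma qf_le: assumes "ns n w = 1" shows "quad_form n A w \<le> vnorm n (mvec n A w)"
proof -
  have "(quad_form n A w)^2 \<le> ns n w * ns n (mvec n A w)"
    unfolding qf_as ns_def by (rule Cauchy_Schwarz_ineq_sum)
  then show ?thesis unfolding vnorm_def ns_def[symmetric] using assms by (simp add: real_le_rsqrt)
qed

lemma sq_le_ns: "x \<in> cube n \<Longrightarrow> (v x)^2 \<le> ns n v"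
  unfolding ns_def by (rule member_le_sum) (auto simp: finite_cube)

lemma abs_le_1: "x \<in> cube n \<Longrightarrow> ns n v = 1 \<Longrightarrow> \<bar>v x\<bar> \<le> 1"
  using sq_le_ns[of x n v] by (simp add: abs_square_le_1)

lemma sadj_01: "sens_adj f x y \<in> {0,1}" by (simp add: sens_adj_def)
lemma sadj_sym: "sens_adj f x y = sens_adj f y x"
  unfolding sens_adj_def by (auto simp: Un_commute)

lemma bdd: "bdd_above {vnorm n (mvec n (sens_adj f) v) | v. vnorm n v = 1}"
proof (rule bdd_aboveI)
  fix r assume "r \<in> {vnorm n (mvec n (sens_adj f) v) | v. vnorm n v = 1}"
  then obtain v where r: "r = vnorm n (mvec n (sens_adj f) v)" and v: "ns n v = 1" by (auto simp: vnorm_iff)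
  let ?c = "real (card (cube n))"
  have "(mvec n (sens_adj f) v x)^2 \<le> ?c" for x
  proof -
    have "(mvec n (sens_adj f) v x)^2 \<le> (\<Sum>y\<in>cube n. (sens_adj f x y)^2) * ns n v"
      unfolding mvec_def ns_def by (rule Cauchy_Schwarz_ineq_sum)
    also have "\<dots> = (\<Sum>y\<in>cube n. (sens_adj f x y)^2)" using v by simp
    also have "\<dots> \<le> (\<Sum>y\<in>cube n. 1)" by (rule sum_mono) (simp add: sens_adj_def)
    finally show ?thesis by simp
  qed
  then have "ns n (mvec n (sens_adj f) v) \<le> (\<Sum>x\<in>cube n. ?c)" unfolding ns_def by (intro sum_mono) auto
  then have "ns n (mvec n (sens_adj f) v) \<le> ?c * ?c" by simp
  then have "vnorm n (mvec n (sens_adj f) v) \<le> sqrt (?c * ?c)"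
    unfolding vnorm_def ns_def[symmetric] by (rule real_sqrt_le_mono)
  then show "r \<le> ?c" using r by simp
qed

definition e0 :: "nat set \<Rightarrow> real" where "e0 x = (if x = {} then 1 else 0)"
lemma ns_e0: "ns n e0 = 1"
proof -
  have "{} \<in> cube n" by (simp add: cube_def)
  have "ns n e0 = (\<Sum>x\<in>cube n. if x = {} then 1 else 0)" unfolding ns_def e0_def
    by (rule sum.cong) auto
  then show ?thesis using \<open>{} \<in> cube n\<close> finite_cube by simp
qed

lemma op_ge: "ns n w = 1 \<Longrightarrow> vnorm n (mvec n (sens_adj f) w) \<le> op_norm n (sens_adj f)"
  unfolding op_norm_def by (rule cSup_upper[OF _ bdd]) (auto simp: vnorm_iff)

lemma op_le: "(\<And>v. ns n v = 1 \<Longrightarrow> vnorm n (mvec n (sens_adj f) v) \<le> m) \<Longrightarrow> op_norm n (sens_adj f) \<le> m"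
  unfolding op_norm_def by (rule cSup_least) (auto simp: vnorm_iff intro: ns_e0)

lemma neg1sq: "((-1::real)^k)^2 = 1" by (induct k) (auto simp: power2_eq_square)

lemma qf_flip: "quad_form n (sens_adj f) (\<lambda>x. (-1)^card x * v x) = - quad_form n (sens_adj f) v"
  unfolding quad_form_def sum_negf[symmetric]
proof (intro sum.cong refl)
  fix x y assume xy: "x \<in> cube n" "y \<in> cube n"
  show "(-1)^card x * v x * sens_adj f x y * ((-1)^card y * v y) = - (v x * sens_adj f x y * v y)"
  proof (cases "sens_adj f x y = 0")
    case False
    then have c: "card (sd x y) = 1" by (auto simp: sens_adj_def sd_def split: if_splits)
    have "(-1::real)^card x * (-1)^card y = -1"
      using par[OF cube_finite_el[OF xy(1)] cube_finite_el[OF xy(2)]] c by (simp add: sd_def)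
    have "(-1)^card x * v x * sens_adj f x y * ((-1)^card y * v y) =
       ((-1::real)^card x * (-1)^card y) * (v x * sens_adj f x y * v y)" by (simp add: mult_ac)
    then show ?thesis using \<open>(-1::real)^card x * (-1)^card y = -1\<close> by simp
  qed simp
qed

lemma ns_flip: "ns n (\<lambda>x. (-1)^card x * v x) = ns n v"
  unfolding ns_def by (simp add: power_mult_distrib neg1sq)

lemma qf_scale: "quad_form n A (\<lambda>x. c * v x) = c^2 * quad_form n A v"
  unfolding quad_form_def by (simp add: sum_distrib_left power2_eq_square mult_ac)
lemma ns_scale: "ns n (\<lambda>x. c * v x) = c^2 * ns n v"
  unfolding ns_def by (simp add: sum_distrib_left power_mult_distrib)

lemma polar:
  assumes sym: "\<And>x y. A x y = A y x"
  shows "quad_form n A (\<lambda>x. u x + s x) - quad_form n A (\<lambda>x. u x - s x) = 4 * (\<Sum>x\<in>cube n. s x * mvec n A u x)"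
proof -
  let ?C = "cube n"
  have "quad_form n A (\<lambda>x. u x + s x) - quad_form n A (\<lambda>x. u x - s x) =
     (\<Sum>x\<in>?C. \<Sum>y\<in>?C. 2 * (u x * A x y * s y) + 2 * (s x * A x y * u y))"
    unfolding quad_form_def sum_subtractf[symmetric] by (intro sum.cong refl) (simp add: algebra_simps)
  also have "\<dots> = 2 * (\<Sum>x\<in>?C. \<Sum>y\<in>?C. u x * A x y * s y) + 2 * (\<Sum>x\<in>?C. \<Sum>y\<in>?C. s x * A x y * u y)"
    by (simp add: sum.distrib sum_distrib_left)
  also have "(\<Sum>x\<in>?C. \<Sum>y\<in>?C. u x * A x y * s y) = (\<Sum>x\<in>?C. \<Sum>y\<in>?C. s x * A x y * u y)"
    by (subst sum.swap) (simp add: sym mult_ac)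
  also have "(\<Sum>x\<in>?C. \<Sum>y\<in>?C. s x * A x y * u y) = (\<Sum>x\<in>cube n. s x * mvec n A u x)"
    unfolding mvec_def by (simp add: sum_distrib_left mult_ac)
  finally show ?thesis by simp
qed

lemma coord_cont [continuous_intros]: "continuous_on S (\<lambda>v::nat set \<Rightarrow> real. v x)"
  by (rule continuous_on_subset[OF continuous_on_product_coordinates]) simp



lemma spectral:
  obtains w0 where "ns n w0 = 1" "quad_form n (sens_adj f) w0 = op_norm n (sens_adj f)"
proof -
  let ?A = "sens_adj f"
  define S where "S x = (if x \<in> cube n then {-1..1} else {0::real})" for x
  define K where "K = PiE UNIV S \<inter> {v. ns n v = 1}"
  have "compactin (product_topology (\<lambda>i. euclidean) UNIV) (PiE UNIV S)"
    by (subst compactin_PiE) (auto simp: S_def)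
  then have c1: "compact (PiE UNIV S)" by (simp add: euclidean_product_topology)
  have "closed {v. ns n v = 1}"
    unfolding ns_def by (rule closed_Collect_eq) (intro continuous_intros)+
  then have cK: "compact K" unfolding K_def using c1 by blast
  have "e0 \<in> K" unfolding K_def by (auto simp: ns_e0 S_def e0_def cube_def)
  then have neK: "K \<noteq> {}" by auto
  have "continuous_on K (quad_form n ?A)" unfolding quad_form_def by (intro continuous_intros)
  then obtain w0 where w0: "w0 \<in> K" and mx: "\<And>y. y \<in> K \<Longrightarrow> quad_form n ?A y \<le> quad_form n ?A w0"
    using continuous_attains_sup[OF cK neK] by blast
  define m where "m = quad_form n ?A w0"
  have nw0: "ns n w0 = 1" using w0 by (simp add: K_def)
  have c1: "quad_form n ?A v \<le> m" if "ns n v = 1" for v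
  proof -
    define v' where "v' x = (if x \<in> cube n then v x else 0)" for x
    have "v' \<in> K" unfolding K_def
      using abs_le_1[OF _ that] by (auto simp: v'_def S_def ns_cong[of n v' v] that abs_le_iff)
    moreover have "quad_form n ?A v' = quad_form n ?A v" by (rule qf_cong) (simp add: v'_def)
    ultimately show ?thesis using mx m_def by metis
  qed
  have c2: "quad_form n ?A v \<le> m * ns n v" for v
  proof (cases "ns n v = 0")
    case True
    then have "\<forall>x\<in>cube n. (v x)^2 = 0" unfolding ns_def using finite_cube
      by (subst sum_nonneg_eq_0_iff[symmetric]) auto
    then have "quad_form n ?A v = quad_form n ?A (\<lambda>_. 0)" by (intro qf_cong) auto
    then show ?thesis using True by (simp add: quad_form_def)
  next
    case False
    then have pos: "ns n v > 0" using ns_nonneg[of n v] by simp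
    define c where "c = 1 / sqrt (ns n v)"
    have c2: "c^2 = 1 / ns n v" using pos by (simp add: c_def power_divide)
    have "ns n (\<lambda>x. c * v x) = 1" unfolding ns_scale c2 using pos by simp
    then have "c^2 * quad_form n ?A v \<le> m" using c1 qf_scale by metis
    then show ?thesis using pos unfolding c2 by (simp add: field_simps)
  qed
  have c3: "- quad_form n ?A v \<le> m * ns n v" for v
    using c2[of "\<lambda>x. (-1)^card x * v x"] by (simp add: qf_flip ns_flip)
  have mpos: "0 \<le> m" using c2[of w0] c3[of w0] nw0 by simp
  have c4: "vnorm n (mvec n ?A u) \<le> m" if nu: "ns n u = 1" for u
  proof -
    define a where "a = mvec n ?A u"
    define t where "t = vnorm n a"
    show ?thesis
    proof (cases "t = 0")
      case True then show ?thesis using mpos by (simp add: t_def a_def)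
    next
      case False
      have tpos: "t > 0" using False ns_nonneg[of n a] by (simp add: t_def vnorm_def ns_def[symmetric])
      have nsa: "ns n a = t^2" by (simp add: t_def vnorm_def ns_def[symmetric] ns_nonneg)
      define s where "s x = a x / t" for x
      have ns1: "ns n s = 1" unfolding s_def using ns_scale[of n "1/t" a] nsa tpos
        by (simp add: power_divide field_simps)
      have "(\<Sum>x\<in>cube n. s x * mvec n ?A u x) = ns n a / t"
        unfolding s_def a_def ns_def by (simp add: sum_divide_distrib power2_eq_square)
      also have "\<dots> = t" using nsa tpos by (simp add: power2_eq_square)
      finally have st: "(\<Sum>x\<in>cube n. s x * mvec n ?A u x) = t" .
      have pl: "quad_form n ?A (\<lambda>x. u x + s x) - quad_form n ?A (\<lambda>x. u x - s x) = 4 * t"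
        using polar[of ?A n u s] sadj_sym st by metis
      have "ns n (\<lambda>x. u x + s x) + ns n (\<lambda>x. u x - s x) = 2 * ns n u + 2 * ns n s"
      proof -
        have "ns n (\<lambda>x. u x + s x) + ns n (\<lambda>x. u x - s x) = (\<Sum>x\<in>cube n. 2 * (u x)^2 + 2 * (s x)^2)"
          unfolding ns_def sum.distrib[symmetric] by (intro sum.cong refl) (simp add: power2_eq_square algebra_simps)
        also have "\<dots> = 2 * ns n u + 2 * ns n s" unfolding ns_def by (simp add: sum.distrib sum_distrib_left)
        finally show ?thesis .
      qed
      then have S4: "ns n (\<lambda>x. u x + s x) + ns n (\<lambda>x. u x - s x) = 4" using nu ns1 by simp
      have "m * ns n (\<lambda>x. u x + s x) + m * ns n (\<lambda>x. u x - s x) = m * 4"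
        using S4 by (metis distrib_left)
      then have "4 * t \<le> m * 4" using pl c2[of "\<lambda>x. u x + s x"] c3[of "\<lambda>x. u x - s x"] by linarith
      then show ?thesis by (simp add: t_def a_def)
    qed
  qed
  have "op_norm n ?A \<le> m" using c4 by (rule op_le)
  moreover have "m \<le> op_norm n ?A" unfolding m_def using qf_le[OF nw0] op_ge[OF nw0] by (rule order_trans)
  ultimately show ?thesis using that nw0 m_def by auto
qed


theorem lemma4p2:
  fixes n :: nat and f :: "nat set \<Rightarrow> real"
  assumes "\<forall>x\<in>cube n. f x \<in> {0, 1}"
  defines "g \<equiv> (\<lambda>x. 1 - 2 * f x)"
  defines "R \<equiv> mmul n (hadamard n) (mmul n (mdiag g) (hadamard n))"
  defines "M \<equiv> (\<lambda>x y. mmul n R (mmul n weight_mat R) x y - weight_mat x y)"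
  shows "(\<exists>v. vnorm n v = 1 \<and> quad_form n M v = op_norm n (sens_adj f))
       \<and> (\<forall>v. vnorm n v = 1 \<longrightarrow> quad_form n M v \<le> op_norm n (sens_adj f))"
proof -
  have id: "quad_form n M v = quad_form n (sens_adj f) (mvec n (hadamard n) v)" for v
    unfolding M_def R_def g_def by (rule main_id[OF assms(1)])
  obtain w0 where nw0: "ns n w0 = 1" and q0: "quad_form n (sens_adj f) w0 = op_norm n (sens_adj f)"
    by (rule spectral)
  have ex: "vnorm n (mvec n (hadamard n) w0) = 1 \<and> quad_form n M (mvec n (hadamard n) w0) = op_norm n (sens_adj f)"
  proof
    show "vnorm n (mvec n (hadamard n) w0) = 1" using nw0 by (simp add: vnorm_iff nsH)
    have "quad_form n (sens_adj f) (mvec n (hadamard n) (mvec n (hadamard n) w0)) = quad_form n (sens_adj f) w0"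
      by (rule qf_cong) (simp add: HH)
    then show "quad_form n M (mvec n (hadamard n) w0) = op_norm n (sens_adj f)" using id q0 by simp
  qed
  have all: "quad_form n M v \<le> op_norm n (sens_adj f)" if "vnorm n v = 1" for v
  proof -
    have h: "ns n (mvec n (hadamard n) v) = 1" using that by (simp add: vnorm_iff nsH)
    show ?thesis unfolding id using qf_le[OF h] op_ge[OF h] by (rule order_trans)
  qed
  show ?thesis using ex all by blast
qed

end
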